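(* If there exists a continuum that is not coastal, then there exists a continuum $Y$ and a null-aposyndetic point $y\in Y$ such that $Y$ is not coastal at $y$.
   Context: A continuum is a nondegenerate compact connected Hausdorff space. $\kappa(x;p)$ denotes the union of all subcontinua $M\neq X$ of $X$ with $x\in M$ and $p\notin M$. $X$ is coastal at $x$ if $\kappa(x;p)$ is dense in $X$ for some $p\neq x$, and coastal if it is coastal at every point. A point $x\in X$ is null-aposyndetic if no proper subcontinuum of $X$ contains $x$ in its interior. *)

theory Defs
  imports "HOL-Analysis.Analysis"
begin

definition continuum :: "'a topology \<Rightarrow> bool" where
  "continuum X \<longleftrightarrow> compact_space X \<and> connected_space X \<and> Hausdorff_space X
     \<and> (\<exists>x\<in>topspace X. \<exists>y\<in>topspace X. x \<noteq> y)"

text \<open>A subcontinuum of X: a nonempty compact connected subset (degenerate ones allowed).\<close>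
definition subcontinuum :: "'a topology \<Rightarrow> 'a set \<Rightarrow> bool" where
  "subcontinuum X M \<longleftrightarrow> M \<noteq> {} \<and> compactin X M \<and> connectedin X M"

definition kappa :: "'a topology \<Rightarrow> 'a \<Rightarrow> 'a \<Rightarrow> 'a set" where
  "kappa X x p = \<Union>{M. subcontinuum X M \<and> M \<noteq> topspace X \<and> x \<in> M \<and> p \<notin> M}"

definition coastal_at :: "'a topology \<Rightarrow> 'a \<Rightarrow> bool" where
  "coastal_at X x \<longleftrightarrow> (\<exists>p\<in>topspace X. p \<noteq> x \<and> X closure_of (kappa X x p) = topspace X)"

definition coastal :: "'a topology \<Rightarrow> bool" where
  "coastal X \<longleftrightarrow> (\<forall>x\<in>topspace X. coastal_at X x)"

definition null_aposyndetic :: "'a topology \<Rightarrow> 'a \<Rightarrow> bool" where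
  "null_aposyndetic X x \<longleftrightarrow> x \<in> topspace X \<and>
     \<not> (\<exists>M. subcontinuum X M \<and> M \<noteq> topspace X \<and> x \<in> X interior_of M)"

end

theory Submission imports Defs begin

definition pts :: "'a topology \<Rightarrow> 'a set \<Rightarrow> 'a set set" where
  "pts X M = insert M ((\<lambda>z. {z}) ` (topspace X - M))"

definition coll :: "'a topology \<Rightarrow> 'a set \<Rightarrow> 'a set topology" where
  "coll X M = topology (\<lambda>U. U \<subseteq> pts X M \<and> openin X (\<Union>U))"

lemma pts_disj: "P \<in> pts X M \<Longrightarrow> Q \<in> pts X M \<Longrightarrow> P \<noteq> Q \<Longrightarrow> P \<inter> Q = {}"
  unfolding pts_def by auto

lemma Union_Int_pts:
  assumes "S \<subseteq> pts X M" "T \<subseteq> pts X M"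
  shows "\<Union>(S \<inter> T) = \<Union>S \<inter> \<Union>T"
proof (rule equalityI)
  show "\<Union>(S \<inter> T) \<subseteq> \<Union>S \<inter> \<Union>T" by blast
  show "\<Union>S \<inter> \<Union>T \<subseteq> \<Union>(S \<inter> T)"
  proof
    fix z assume "z \<in> \<Union>S \<inter> \<Union>T"
    then obtain P Q where "P \<in> S" "Q \<in> T" "z \<in> P" "z \<in> Q" by blast
    with assms pts_disj[of P X M Q] have "P = Q" by blast
    with \<open>P \<in> S\<close> \<open>Q \<in> T\<close> \<open>z \<in> P\<close> show "z \<in> \<Union>(S \<inter> T)" by blast
  qed
qed

lemma istop_coll: "istopology (\<lambda>U. U \<subseteq> pts X M \<and> openin X (\<Union>U))"
proof -
  have h1: "S \<inter> T \<subseteq> pts X M \<and> openin X (\<Union>(S \<inter> T))"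
    if "S \<subseteq> pts X M \<and> openin X (\<Union>S)" "T \<subseteq> pts X M \<and> openin X (\<Union>T)" for S T
    using that Union_Int_pts[of S X M T] by auto
  have h2: "\<Union>K \<subseteq> pts X M \<and> openin X (\<Union>(\<Union>K))"
    if K: "\<forall>S\<in>K. S \<subseteq> pts X M \<and> openin X (\<Union>S)" for K
  proof -
    have "\<Union>(\<Union>K) = \<Union>(Union ` K)" by blast
    moreover have "openin X (\<Union>(Union ` K))" using K by auto
    ultimately show ?thesis using K by auto
  qed
  show ?thesis unfolding istopology_def using h1 h2 by blast
qed

lemma openin_coll: "openin (coll X M) U \<longleftrightarrow> U \<subseteq> pts X M \<and> openin X (\<Union>U)"
  unfolding coll_def topology_inverse'[OF istop_coll] by simp

lemma Union_pts: "M \<subseteq> topspace X \<Longrightarrow> \<Union>(pts X M) = topspace X"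
  unfolding pts_def by auto

lemma topspace_coll: "M \<subseteq> topspace X \<Longrightarrow> topspace (coll X M) = pts X M"
proof -
  assume M: "M \<subseteq> topspace X"
  have "openin (coll X M) (pts X M)" by (simp add: openin_coll Union_pts[OF M])
  moreover have "U \<subseteq> pts X M" if "openin (coll X M) U" for U using that openin_coll by auto
  ultimately show ?thesis by (metis openin_subset subset_antisym openin_topspace)
qed

lemma Union_diff_pts:
  assumes "M \<subseteq> topspace X" "C \<subseteq> pts X M"
  shows "\<Union>(pts X M - C) = topspace X - \<Union>C"
proof
  show "\<Union>(pts X M - C) \<subseteq> topspace X - \<Union>C"
  proof
    fix z assume "z \<in> \<Union>(pts X M - C)"
    then obtain P where P: "P \<in> pts X M" "P \<notin> C" "z \<in> P" by blast
    have "z \<notin> \<Union>C"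
    proof
      assume "z \<in> \<Union>C"
      then obtain Q where "Q \<in> C" "z \<in> Q" by blast
      then show False using P assms pts_disj[of P X M Q] by blast
    qed
    then show "z \<in> topspace X - \<Union>C" using P Union_pts[OF assms(1)] by blast
  qed
next
  show "topspace X - \<Union>C \<subseteq> \<Union>(pts X M - C)" using Union_pts[OF assms(1)] by blast
qed

lemma closedin_coll:
  assumes "M \<subseteq> topspace X"
  shows "closedin (coll X M) C \<longleftrightarrow> C \<subseteq> pts X M \<and> closedin X (\<Union>C)"
proof -
  have "closedin (coll X M) C \<longleftrightarrow> C \<subseteq> pts X M \<and> openin X (\<Union>(pts X M - C))"
    unfolding closedin_def topspace_coll[OF assms] openin_coll by auto
  also have "\<dots> \<longleftrightarrow> C \<subseteq> pts X M \<and> closedin X (\<Union>C)"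
  proof (cases "C \<subseteq> pts X M")
    case True
    then have "\<Union>C \<subseteq> topspace X" using Union_pts[OF assms] by blast
    then show ?thesis using True Union_diff_pts[OF assms True] by (simp add: closedin_def)
  qed auto
  finally show ?thesis .
qed

definition proj :: "'a set \<Rightarrow> 'a \<Rightarrow> 'a set" where
  "proj M z = (if z \<in> M then M else {z})"

lemma proj_preimage:
  assumes "U \<subseteq> pts X M" "M \<subseteq> topspace X"
  shows "{z \<in> topspace X. proj M z \<in> U} = \<Union>U"
proof
  show "\<Union>U \<subseteq> {z \<in> topspace X. proj M z \<in> U}"
  proof
    fix z assume "z \<in> \<Union>U"
    then obtain P where P: "P \<in> U" "z \<in> P" by blast
    then have "P \<in> pts X M" using assms by blast
    then show "z \<in> {z \<in> topspace X. proj M z \<in> U}" using P assms(2) unfolding pts_def proj_def by auto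
  qed
qed (auto simp: proj_def split: if_splits)

lemma continuous_proj:
  assumes "M \<subseteq> topspace X"
  shows "continuous_map X (coll X M) (proj M)"
  unfolding continuous_map_def topspace_coll[OF assms]
proof (intro conjI allI impI)
  show "proj M \<in> topspace X \<rightarrow> pts X M" unfolding proj_def pts_def by auto
  fix U assume "openin (coll X M) U"
  then show "openin X {x \<in> topspace X. proj M x \<in> U}"
    using proj_preimage[of U X M] openin_coll assms by metis
qed

lemma image_proj:
  assumes "M \<subseteq> topspace X" "M \<noteq> {}"
  shows "proj M ` topspace X = pts X M"
  using assms unfolding proj_def pts_def by (auto simp: image_iff)

lemma open_saturation:
  assumes "closedin X M" "openin X U"
  shows "openin (coll X M) {R \<in> pts X M. R \<subseteq> U}"
proof -
  have M: "M \<subseteq> topspace X" using assms closedin_subset by auto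
  have U: "U \<subseteq> topspace X" using assms openin_subset by auto
  have "openin X (\<Union>{R \<in> pts X M. R \<subseteq> U})"
  proof (cases "M \<subseteq> U")
    case True
    have "\<Union>{R \<in> pts X M. R \<subseteq> U} = U"
    proof (rule equalityI)
      show "U \<subseteq> \<Union>{R \<in> pts X M. R \<subseteq> U}"
      proof
        fix z assume z: "z \<in> U"
        show "z \<in> \<Union>{R \<in> pts X M. R \<subseteq> U}"
        proof (cases "z \<in> M")
          case True
          then show ?thesis using \<open>M \<subseteq> U\<close> unfolding pts_def by blast
        next
          case False
          then have "{z} \<in> pts X M" using z U unfolding pts_def by blast
          then show ?thesis using z by blast
        qed
      qed
    qed blast
    then show ?thesis using assms(2) by simp
  next
    case False
    have "\<Union>{R \<in> pts X M. R \<subseteq> U} = U - M"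
    proof (rule equalityI)
      show "U - M \<subseteq> \<Union>{R \<in> pts X M. R \<subseteq> U}"
      proof
        fix z assume z: "z \<in> U - M"
        then have "{z} \<in> pts X M" using U unfolding pts_def by blast
        then show "z \<in> \<Union>{R \<in> pts X M. R \<subseteq> U}" using z by blast
      qed
      show "\<Union>{R \<in> pts X M. R \<subseteq> U} \<subseteq> U - M"
        using False unfolding pts_def by blast
    qed
    then show ?thesis using assms by auto
  qed
  then show ?thesis unfolding openin_coll by auto
qed


lemma connectedin_sepD:
  assumes "connectedin X S" "closedin X E1" "closedin X E2" "S \<subseteq> E1 \<union> E2" "E1 \<inter> E2 \<inter> S = {}"
  shows "E1 \<inter> S = {} \<or> E2 \<inter> S = {}"
proof -
  have "\<not>(\<exists>E1 E2. closedin X E1 \<and> closedin X E2 \<and>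
                S \<subseteq> E1 \<union> E2 \<and> E1 \<inter> E2 \<inter> S = {} \<and> E1 \<inter> S \<noteq> {} \<and> E2 \<inter> S \<noteq> {})"
    using assms(1) unfolding connectedin_closedin by (rule conjunct2)
  then show ?thesis using assms(2-5) by blast
qed

lemma pts_ne: "M \<noteq> {} \<Longrightarrow> P \<in> pts X M \<Longrightarrow> P \<noteq> {}"
  unfolding pts_def by auto

context
  fixes X :: "'a topology" and M :: "'a set"
  assumes cX: "compact_space X" and hX: "Hausdorff_space X"
    and Mne: "M \<noteq> {}" and Mcl: "closedin X M" and Mco: "connectedin X M"
begin

lemma Msub: "M \<subseteq> topspace X" using Mcl closedin_subset by auto

lemma Hausdorff_coll: "Hausdorff_space (coll X M)"
  unfolding Hausdorff_space_def topspace_coll[OF Msub]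
proof (intro allI impI)
  fix P Q assume PQ: "P \<in> pts X M \<and> Q \<in> pts X M \<and> P \<noteq> Q"
  have cp: "compactin X R" if "R \<in> pts X M" for R
    using that closedin_compact_space[OF cX Mcl] Msub unfolding pts_def by auto
  have "disjnt P Q" using PQ pts_disj[of P X M Q] by (simp add: disjnt_def)
  then obtain U V where UV: "openin X U" "openin X V" "P \<subseteq> U" "Q \<subseteq> V" "disjnt U V"
    using hX cp PQ unfolding Hausdorff_space_compact_sets by meson
  have "disjnt {R \<in> pts X M. R \<subseteq> U} {R \<in> pts X M. R \<subseteq> V}"
    using UV(5) pts_ne[OF Mne] unfolding disjnt_def by blast
  then show "\<exists>U V. openin (coll X M) U \<and> openin (coll X M) V \<and> P \<in> U \<and> Q \<in> V \<and> disjnt U V"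
    using open_saturation[OF Mcl UV(1)] open_saturation[OF Mcl UV(2)] UV PQ by blast
qed

lemma compact_coll: "compact_space (coll X M)"
  using image_compactin[OF cX[unfolded compact_space_def] continuous_proj[OF Msub]]
  unfolding compact_space_def image_proj[OF Msub Mne] topspace_coll[OF Msub] .

lemma connected_coll: "connected_space X \<Longrightarrow> connected_space (coll X M)"
  using connectedin_continuous_map_image[OF continuous_proj[OF Msub], of "topspace X"]
  unfolding image_proj[OF Msub Mne] connectedin_topspace topspace_coll[OF Msub] 
  by (metis Msub connectedin_topspace topspace_coll)

lemma continuum_coll:
  assumes "continuum X" "M \<noteq> topspace X"
  shows "continuum (coll X M)"
proof -
  obtain z where z: "z \<in> topspace X" "z \<notin> M" using assms(2) Msub by blast
  then have "{z} \<in> pts X M" "M \<in> pts X M" "{z} \<noteq> M" unfolding pts_def by auto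
  then show ?thesis using compact_coll connected_coll Hausdorff_coll assms(1)
    unfolding continuum_def topspace_coll[OF Msub] by metis
qed

lemma Union_connected:
  assumes N: "connectedin (coll X M) N" and MN: "M \<in> N" and Nc: "compactin (coll X M) N"
  shows "connectedin X (\<Union>N)"
proof -
  have Npts: "N \<subseteq> pts X M" using connectedin_subset_topspace[OF N] unfolding topspace_coll[OF Msub] .
  then have Nsub: "\<Union>N \<subseteq> topspace X" using Union_pts[OF Msub] by blast
  show ?thesis unfolding connectedin_closedin
  proof (intro conjI Nsub notI)
    assume "\<exists>E1 E2. closedin X E1 \<and> closedin X E2 \<and> \<Union>N \<subseteq> E1 \<union> E2 \<and> E1 \<inter> E2 \<inter> \<Union>N = {} \<and> E1 \<inter> \<Union>N \<noteq> {} \<and> E2 \<inter> \<Union>N \<noteq> {}"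
    then obtain E1 E2 where E: "closedin X E1" "closedin X E2" "\<Union>N \<subseteq> E1 \<union> E2"
      "E1 \<inter> E2 \<inter> \<Union>N = {}" "E1 \<inter> \<Union>N \<noteq> {}" "E2 \<inter> \<Union>N \<noteq> {}" by blast
    have split: "R \<subseteq> E1 \<or> R \<subseteq> E2" if RN: "R \<in> N" for R
    proof (cases "R = M")
      case True
      have "M \<subseteq> E1 \<union> E2" "E1 \<inter> E2 \<inter> M = {}" using E(3,4) MN by blast+
      then have "E1 \<inter> M = {} \<or> E2 \<inter> M = {}" using connectedin_sepD[OF Mco E(1,2)] by blast
      then show ?thesis using \<open>M \<subseteq> E1 \<union> E2\<close> True by blast
    next
      case False
      have "R \<in> insert M ((\<lambda>z. {z}) ` (topspace X - M))" using RN Npts unfolding pts_def by blast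
      then obtain z where "R = {z}" using False by blast
      then show ?thesis using E(3) RN by blast
    qed
    have UE1: "\<Union>{R \<in> N. R \<subseteq> E1} = E1 \<inter> \<Union>N"
    proof (rule equalityI)
      show "E1 \<inter> \<Union>N \<subseteq> \<Union>{R \<in> N. R \<subseteq> E1}"
      proof
        fix z assume z: "z \<in> E1 \<inter> \<Union>N"
        then obtain R where R: "R \<in> N" "z \<in> R" by blast
        have "R \<subseteq> E1" using split[OF R(1)] z R E(4) by blast
        then show "z \<in> \<Union>{R \<in> N. R \<subseteq> E1}" using R by blast
      qed
    qed blast
    have UE2: "\<Union>{R \<in> N. R \<subseteq> E2} = E2 \<inter> \<Union>N"
    proof (rule equalityI)
      show "E2 \<inter> \<Union>N \<subseteq> \<Union>{R \<in> N. R \<subseteq> E2}"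
      proof
        fix z assume z: "z \<in> E2 \<inter> \<Union>N"
        then obtain R where R: "R \<in> N" "z \<in> R" by blast
        have "R \<subseteq> E2" using split[OF R(1)] z R E(4) by blast
        then show "z \<in> \<Union>{R \<in> N. R \<subseteq> E2}" using R by blast
      qed
    qed blast
    have NcY: "closedin X (\<Union>N)"
      using compactin_imp_closedin[OF Hausdorff_coll Nc] unfolding closedin_coll[OF Msub] by (rule conjunct2)
    have c1: "closedin (coll X M) {R \<in> N. R \<subseteq> E1}"
    proof -
      have "{R \<in> N. R \<subseteq> E1} \<subseteq> pts X M" using Npts by blast
      moreover have "closedin X (E1 \<inter> \<Union>N)" using E(1) NcY by (rule closedin_Int)
      ultimately show ?thesis unfolding closedin_coll[OF Msub] UE1 by (rule conjI)
    qed
    have c2: "closedin (coll X M) {R \<in> N. R \<subseteq> E2}"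
    proof -
      have "{R \<in> N. R \<subseteq> E2} \<subseteq> pts X M" using Npts by blast
      moreover have "closedin X (E2 \<inter> \<Union>N)" using E(2) NcY by (rule closedin_Int)
      ultimately show ?thesis unfolding closedin_coll[OF Msub] UE2 by (rule conjI)
    qed
    have "N \<subseteq> {R \<in> N. R \<subseteq> E1} \<union> {R \<in> N. R \<subseteq> E2}" using split by blast
    moreover have "{R \<in> N. R \<subseteq> E1} \<inter> {R \<in> N. R \<subseteq> E2} \<inter> N = {}"
    proof -
      have "R = {}" if "R \<in> N" "R \<subseteq> E1" "R \<subseteq> E2" for R
      proof -
        have "R \<subseteq> E1 \<inter> E2 \<inter> \<Union>N" using that by blast
        then show ?thesis using E(4) by blast
      qed
      moreover have "R \<noteq> {}" if "R \<in> N" for R using pts_ne[OF Mne] Npts that by blast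
      ultimately show ?thesis by blast
    qed
    moreover have "{R \<in> N. R \<subseteq> E1} \<inter> N \<noteq> {}"
    proof
      assume "{R \<in> N. R \<subseteq> E1} \<inter> N = {}"
      then have "{R \<in> N. R \<subseteq> E1} = {}" by blast
      then have "\<Union>{R \<in> N. R \<subseteq> E1} = {}" by (simp only: Union_empty)
      then show False using UE1 E(5) by simp
    qed
    moreover have "{R \<in> N. R \<subseteq> E2} \<inter> N \<noteq> {}"
    proof
      assume "{R \<in> N. R \<subseteq> E2} \<inter> N = {}"
      then have "{R \<in> N. R \<subseteq> E2} = {}" by blast
      then have "\<Union>{R \<in> N. R \<subseteq> E2} = {}" by (simp only: Union_empty)
      then show False using UE2 E(6) by simp
    qed
    ultimately show False using connectedin_sepD[OF N c1 c2] by blast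
  qed
qed


lemma Union_subcontinuum:
  assumes N: "subcontinuum (coll X M) N" and MN: "M \<in> N"
  shows "subcontinuum X (\<Union>N)"
proof -
  have NcY: "closedin X (\<Union>N)"
    using compactin_imp_closedin[OF Hausdorff_coll] N closedin_coll[OF Msub]
    unfolding subcontinuum_def by blast
  then show ?thesis
    using Union_connected[OF _ MN] N closedin_compact_space[OF cX] MN Mne
    unfolding subcontinuum_def by blast
qed

lemma Union_notin:
  assumes "N \<subseteq> pts X M" "p \<notin> M" "{p} \<notin> N"
  shows "p \<notin> \<Union>N"
  using assms unfolding pts_def by blast

lemma Union_proper:
  assumes "N \<subseteq> pts X M" "M \<in> N" "\<Union>N = topspace X"
  shows "N = pts X M"
proof
  show "pts X M \<subseteq> N"
  proof
    fix P assume P: "P \<in> pts X M"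
    show "P \<in> N"
    proof (cases "P = M")
      case False
      then obtain z where z: "P = {z}" "z \<in> topspace X" "z \<notin> M" using P unfolding pts_def by blast
      then show ?thesis using Union_notin[OF assms(1) z(3)] assms(3) by blast
    qed (use assms in auto)
  qed
qed (use assms in auto)

end

lemma kappa_sub: "kappa X x p \<subseteq> topspace X"
  unfolding kappa_def subcontinuum_def using compactin_subset_topspace by blast

lemma finite_chain_max:
  assumes "finite D" "D \<noteq> {}" "\<forall>a\<in>D. \<forall>b\<in>D. R a b \<or> R b a" "\<forall>a b c. R a b \<longrightarrow> R b c \<longrightarrow> R a c"
  shows "\<exists>d\<in>D. \<forall>e\<in>D. R e d"
  using assms(1,2,3)
proof (induction D rule: finite_ne_induct)
  case (singleton x)
  then show ?case by auto
next
  case (insert x F)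
  have "\<forall>a\<in>F. \<forall>b\<in>F. R a b \<or> R b a" using insert.prems by blast
  then obtain d where d: "d \<in> F" "\<forall>e\<in>F. R e d" using insert.IH by blast
  have xx: "R x x" using insert.prems by blast
  show ?case
  proof (cases "R x d")
    case True
    then have "\<forall>e\<in>insert x F. R e d" using d by blast
    then show ?thesis using d(1) by blast
  next
    case False
    then have "R d x" using insert.prems d(1) by blast
    then have "\<forall>e\<in>F. R e x" using d(2) assms(4) by blast
    then have "\<forall>e\<in>insert x F. R e x" using xx by blast
    then show ?thesis by blast
  qed
qed

lemma bexI_neg: "\<not> (\<exists>c\<in>C. \<forall>a\<in>C. P a c) \<Longrightarrow> c \<in> C \<Longrightarrow> \<not> (\<forall>a\<in>C. P a c)"
  by blast
lemma bexE_neg: "\<not> (\<forall>a\<in>C. P a c) \<Longrightarrow> (\<And>a. a \<in> C \<Longrightarrow> \<not> P a c \<Longrightarrow> thesis) \<Longrightarrow> thesis"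
  by blast
lemma tot_inst: "\<forall>a\<in>C. \<forall>b\<in>C. P a b \<or> P b a \<Longrightarrow> a \<in> C \<Longrightarrow> c \<in> C \<Longrightarrow> P a c \<or> P c a"
  by blast
lemma disjE_neg: "A \<or> B \<Longrightarrow> \<not> A \<Longrightarrow> B" by blast
lemma neq_from: "\<not> (a = c \<or> Q) \<Longrightarrow> c \<noteq> a" by blast
lemma or_neq: "c = a \<or> Q \<Longrightarrow> c \<noteq> a \<Longrightarrow> Q" by blast
lemma mem_sub_helper: "c \<in> C \<Longrightarrow> C \<subseteq> F \<Longrightarrow> (\<And>N. N \<in> F \<Longrightarrow> N \<subseteq> T) \<Longrightarrow> c \<subseteq> T" by blast
lemma ne_obtain: "C \<noteq> {} \<Longrightarrow> (\<And>c. c \<in> C \<Longrightarrow> thesis) \<Longrightarrow> thesis" by blast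
lemma mem_F_helper: "C \<subseteq> {N. A N \<and> B N \<and> x \<in> N} \<Longrightarrow> c \<in> C \<Longrightarrow> x \<in> c" by blast

lemma exists_maximal:
  fixes X :: "'a topology"
  assumes cont: "continuum X" and x: "x \<in> topspace X"
    and ncoast: "\<forall>p\<in>topspace X. p \<noteq> x \<longrightarrow> X closure_of kappa X x p \<noteq> topspace X"
  shows "\<exists>M. subcontinuum X M \<and> M \<noteq> topspace X \<and> x \<in> M \<and>
           (\<forall>N. subcontinuum X N \<and> N \<noteq> topspace X \<and> x \<in> N \<and> M \<subseteq> X interior_of N \<longrightarrow> N = M)"
proof -
  define F where "F = {N. subcontinuum X N \<and> N \<noteq> topspace X \<and> x \<in> N}"
  define P where "P = (\<lambda>a b. a = b \<or> a \<subseteq> X interior_of b)"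
  have cX: "compact_space X" and hX: "Hausdorff_space X" using cont unfolding continuum_def by auto
  have Ptrans: "P a c" if "P a b" "P b c" for a b c
    using that interior_of_subset[of X b] unfolding P_def by blast
  have Pint: "X interior_of a \<subseteq> X interior_of b" if "P a b" for a b
  proof (cases "a = b")
    case False
    then have "a \<subseteq> X interior_of b" using that unfolding P_def by blast
    then show ?thesis using interior_of_subset[of X a] by blast
  qed simp
  have r1: "relation_of P F \<subseteq> F \<times> F" unfolding relation_of_def by blast
  have r2: "refl_on F (relation_of P F)" unfolding refl_on_def relation_of_def P_def by blast
  have r3: "trans (relation_of P F)" unfolding trans_def relation_of_def using Ptrans by blast
  have r4: "antisym (relation_of P F)"
  proof (rule antisymI)
    fix a b assume "(a, b) \<in> relation_of P F" "(b, a) \<in> relation_of P F"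
    then have "P a b" "P b a" unfolding relation_of_def by auto
    then show "a = b" using interior_of_subset[of X a] interior_of_subset[of X b] unfolding P_def by blast
  qed
  have po: "partial_order_on F (relation_of P F)"
    unfolding partial_order_on_def preorder_on_def using r1 r2 r3 r4 by blast
  have sub_top: "N \<subseteq> topspace X" if "N \<in> F" for N
    using that unfolding F_def subcontinuum_def by (simp add: compactin_subset_topspace)
  have ch: "\<exists>u\<in>F. \<forall>a\<in>C. P a u" if C: "C \<in> Chains (relation_of P F)" for C
  proof -
    have CF: "C \<subseteq> F" using C unfolding Chains_def relation_of_def by blast
    have Ctot: "\<forall>a\<in>C. \<forall>b\<in>C. P a b \<or> P b a" using C unfolding Chains_def relation_of_def by blast
    show ?thesis
    proof (cases "C = {}")
      case True
      obtain a b where ab: "a \<in> topspace X" "b \<in> topspace X" "a \<noteq> b" using cont unfolding continuum_def by blast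
      obtain y where "y \<in> topspace X" "y \<noteq> x"
      proof (cases "a = x")
        case True
        then show ?thesis using that ab by blast
      next
        case False
        then show ?thesis using that ab by blast
      qed
      then have "{x} \<in> F" using x unfolding F_def subcontinuum_def by auto
      then show ?thesis using True by blast
    next
      case Cne: False
      show ?thesis
      proof (cases "\<exists>c\<in>C. \<forall>a\<in>C. P a c")
        case True
        then show ?thesis using CF by blast
      next
        case False
        have up: "\<exists>a\<in>C. c \<subseteq> X interior_of a" if "c \<in> C" for c
        proof -
          have "\<not> (\<forall>a\<in>C. P a c)" using False that by (rule bexI_neg)
          then obtain a where a: "a \<in> C" "\<not> P a c" by (rule bexE_neg)
          have "P a c \<or> P c a" using Ctot a(1) that by (rule tot_inst)
          then have "P c a" using a(2) by (rule disjE_neg)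
          moreover have "c \<noteq> a" using a(2) unfolding P_def by (rule neq_from)
          ultimately have "c \<subseteq> X interior_of a" unfolding P_def by (rule or_neq)
          then show ?thesis using a(1) by (rule bexI)
        qed
        define U where "U = \<Union>C"
        have Usub: "U \<subseteq> topspace X" unfolding U_def
        proof (rule Union_least)
          fix c assume "c \<in> C" then show "c \<subseteq> topspace X" using CF sub_top by (rule mem_sub_helper)
        qed
        obtain c0 where c0: "c0 \<in> C" using Cne by (rule ne_obtain)
        have "x \<in> c0" using CF c0 unfolding F_def by (rule mem_F_helper)
        then have xU: "x \<in> U" unfolding U_def using c0 by (rule UnionI[rotated])
        have Uproper: "U \<noteq> topspace X"
        proof
          assume Ueq: "U = topspace X"
          have cov: "topspace X \<subseteq> \<Union>((\<lambda>c. X interior_of c) ` C)"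
          proof
            fix z assume "z \<in> topspace X"
            then obtain c where c: "c \<in> C" "z \<in> c" unfolding Ueq[symmetric] U_def by (rule UnionE)
            obtain a where a: "a \<in> C" "c \<subseteq> X interior_of a" using up[OF c(1)] by (rule bexE)
            have "z \<in> X interior_of a" using a(2) c(2) by (rule subsetD)
            then show "z \<in> \<Union>((\<lambda>c. X interior_of c) ` C)" using a(1) by (rule UN_I[rotated])
          qed
          have op: "\<forall>V\<in>(\<lambda>c. X interior_of c) ` C. openin X V" by simp
          obtain \<F> where \<F>: "finite \<F>" "\<F> \<subseteq> (\<lambda>c. X interior_of c) ` C" "topspace X \<subseteq> \<Union>\<F>"
            using conjunct2[OF cX[unfolded compact_space_def compactin_def], rule_format, OF conjI[OF op cov]]
            by blast
          then obtain D where D: "D \<subseteq> C" "finite D" "\<F> = (\<lambda>c. X interior_of c) ` D"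
            by (meson finite_subset_image)
          have "D \<noteq> {}"
          proof
            assume "D = {}"
            then have "\<Union>\<F> = {}" using D(3) by simp
            then show False using \<F>(3) xU Ueq by blast
          qed
          then obtain d where d: "d \<in> D" "\<forall>e\<in>D. P e d"
          proof -
            have tot: "\<forall>a\<in>D. \<forall>b\<in>D. P a b \<or> P b a" using Ctot D(1) by blast
            have Ptr: "\<forall>a b c. P a b \<longrightarrow> P b c \<longrightarrow> P a c" using Ptrans by blast
            obtain d where "d \<in> D" "\<forall>e\<in>D. P e d" using finite_chain_max[of D P, OF D(2) \<open>D \<noteq> {}\<close> tot Ptr] by (rule bexE)
            then show ?thesis by (rule that)
          qed
          have "\<Union>\<F> \<subseteq> X interior_of d"
          proof
            fix z assume "z \<in> \<Union>\<F>"
            then obtain e where e: "e \<in> D" "z \<in> X interior_of e" unfolding D(3) by blast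
            have "X interior_of e \<subseteq> X interior_of d" using d(2) e(1) Pint by blast
            then show "z \<in> X interior_of d" using e(2) by blast
          qed
          then have "topspace X \<subseteq> d" using \<F>(3) interior_of_subset[of X d] by blast
          moreover have "d \<in> F" using d(1) D(1) CF by blast
          moreover have "d \<subseteq> topspace X" using sub_top[OF \<open>d \<in> F\<close>] .
          ultimately have "d = topspace X" by blast
          then show False using \<open>d \<in> F\<close> unfolding F_def by blast
        qed
        then obtain p where p: "p \<in> topspace X" "p \<notin> U" using Usub by blast
        have px: "p \<noteq> x" using p xU by blast
        have "C \<subseteq> {M. subcontinuum X M \<and> M \<noteq> topspace X \<and> x \<in> M \<and> p \<notin> M}"
          using CF p(2) unfolding F_def U_def by blast
        then have Uk: "U \<subseteq> kappa X x p"
          unfolding kappa_def U_def by (rule Union_mono)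
        have ksub: "X closure_of kappa X x p \<subseteq> topspace X" by (rule closure_of_subset_topspace)
        define u where "u = X closure_of U"
        have kp: "X closure_of kappa X x p \<noteq> topspace X" using ncoast p(1) px by blast
        have u_proper: "u \<noteq> topspace X"
          using closure_of_mono[OF Uk] ksub kp unfolding u_def by blast
        have Uconn: "connectedin X U"
          unfolding U_def
          by (rule connectedin_Union) (use CF Cne in \<open>auto simp: F_def subcontinuum_def\<close>)
        have "x \<in> u" using xU closure_of_subset[OF Usub] unfolding u_def by blast
        moreover have "subcontinuum X u"
          unfolding subcontinuum_def u_def
          using closedin_compact_space[OF cX closedin_closure_of] connectedin_closure_of[OF Uconn]
            xU closure_of_subset[OF Usub] by blast
        ultimately have uF: "u \<in> F" using u_proper unfolding F_def by blast
        have "P c u" if cC: "c \<in> C" for c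
        proof -
          obtain a where a: "a \<in> C" "c \<subseteq> X interior_of a" using up[OF cC] by blast
          have "a \<subseteq> u" using a closure_of_subset[OF Usub] unfolding u_def U_def by blast
          then show ?thesis using a interior_of_mono[of a u X] unfolding P_def by blast
        qed
        then show ?thesis using uF by blast
      qed
    qed
  qed
  obtain m where m: "m \<in> F" "\<forall>a\<in>F. P m a \<longrightarrow> a = m"
    using predicate_Zorn[OF po ch] by blast
  then show ?thesis unfolding F_def P_def by blast
qed


theorem mainTheorem12:
  fixes X :: "'a topology"
  assumes "continuum X" and "\<not> coastal X"
  shows "\<exists>(Y :: 'a set topology) y. continuum Y \<and> y \<in> topspace Y \<and>
           null_aposyndetic Y y \<and> \<not> coastal_at Y y"
proof -
  have cX: "compact_space X" and hX: "Hausdorff_space X" and conX: "connected_space X"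
    using assms(1) unfolding continuum_def by auto
  obtain x where x: "x \<in> topspace X" "\<not> coastal_at X x" using assms(2) unfolding coastal_def by blast
  have ncoast: "\<forall>p\<in>topspace X. p \<noteq> x \<longrightarrow> X closure_of kappa X x p \<noteq> topspace X"
    using x(2) unfolding coastal_at_def by blast
  obtain M where M: "subcontinuum X M" "M \<noteq> topspace X" "x \<in> M"
    and Mmax: "\<And>N. subcontinuum X N \<Longrightarrow> N \<noteq> topspace X \<Longrightarrow> x \<in> N \<Longrightarrow> M \<subseteq> X interior_of N \<Longrightarrow> N = M"
    using exists_maximal[OF assms(1) x(1) ncoast] by blast
  have Mne: "M \<noteq> {}" and Mco: "connectedin X M" and Mcl: "closedin X M"
    using M compactin_imp_closedin[OF hX] unfolding subcontinuum_def by auto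
  note L = cX hX Mne Mcl Mco
  have Msub: "M \<subseteq> topspace X" using Msub[OF L] .
  define Y where "Y = coll X M"
  have tY: "topspace Y = pts X M" unfolding Y_def using topspace_coll[OF Msub] .
  have contY: "continuum Y" unfolding Y_def using continuum_coll[OF L assms(1) M(2)] .
  have hY: "Hausdorff_space Y" unfolding Y_def using Hausdorff_coll[OF L] .
  have MY: "M \<in> topspace Y" unfolding tY pts_def by simp
  have nap: "null_aposyndetic Y M"
    unfolding null_aposyndetic_def
  proof (intro conjI MY notI)
    assume "\<exists>N. subcontinuum Y N \<and> N \<noteq> topspace Y \<and> M \<in> Y interior_of N"
    then obtain N where N: "subcontinuum Y N" "N \<noteq> topspace Y" "M \<in> Y interior_of N" by blast
    have "compactin Y N" using N(1) unfolding subcontinuum_def by blast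
    then have "N \<subseteq> topspace Y" by (rule compactin_subset_topspace)
    then have Npts: "N \<subseteq> pts X M" unfolding tY .
    have MN: "M \<in> N" using N(3) interior_of_subset[of Y N] by blast
    have sc: "subcontinuum X (\<Union>N)" using Union_subcontinuum[OF L N(1)[unfolded Y_def] MN] .
    have pr: "\<Union>N \<noteq> topspace X"
    proof
      assume "\<Union>N = topspace X"
      then have "N = pts X M" by (rule Union_proper[OF L Npts MN])
      then show False using N(2) tY by simp
    qed
    have "openin Y (Y interior_of N)" by simp
    then have op: "openin X (\<Union>(Y interior_of N))" unfolding Y_def openin_coll by (rule conjunct2)
    have s1: "M \<subseteq> \<Union>(Y interior_of N)" using N(3) by (rule Union_upper)
    have s2: "\<Union>(Y interior_of N) \<subseteq> \<Union>N" using interior_of_subset[of Y N] by (rule Union_mono)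
    have "\<Union>(Y interior_of N) \<subseteq> X interior_of (\<Union>N)" using s2 op by (rule interior_of_maximal)
    then have MI: "M \<subseteq> X interior_of (\<Union>N)" using s1 by blast
    have xN: "x \<in> \<Union>N" using M(3) MN by blast
    have eq: "\<Union>N = M" using Mmax[OF sc pr xN MI] .
    have "X interior_of M = M" using MI interior_of_subset[of X M] unfolding eq by blast
    then have "openin X M" by (metis openin_interior_of)
    moreover have "\<forall>T. openin X T \<and> closedin X T \<longrightarrow> T = {} \<or> T = topspace X"
      using conX unfolding connected_space_clopen_in .
    ultimately have "M = {} \<or> M = topspace X" using Mcl by blast
    then show False using Mne M(2) by blast
  qed
  have nco: "\<not> coastal_at Y M"
  proof
    assume "coastal_at Y M"
    then obtain q where q: "q \<in> topspace Y" "q \<noteq> M" "Y closure_of kappa Y M q = topspace Y"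
      unfolding coastal_at_def by blast
    have "q \<in> insert M ((\<lambda>z. {z}) ` (topspace X - M))" using q(1) unfolding tY pts_def .
    then obtain p where p: "q = {p}" "p \<in> topspace X" "p \<notin> M" using q(2) by blast
    have px: "p \<noteq> x" using p(3) M(3) by blast
    define K where "K = kappa X x p"
    have Ksub: "K \<subseteq> topspace X" unfolding K_def by (rule kappa_sub)
    have KK: "K \<subseteq> X closure_of K" using Ksub by (rule closure_of_subset)
    have "X closure_of K \<noteq> topspace X" using ncoast p(2) px unfolding K_def by blast
    moreover have "X closure_of K \<subseteq> topspace X" by (rule closure_of_subset_topspace)
    ultimately obtain z where z: "z \<in> topspace X" "z \<notin> X closure_of K" by blast
    define U where "U = topspace X - X closure_of K"
    have Uo: "openin X U" unfolding U_def by (simp add: openin_diff)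
    have "M \<in> {M. subcontinuum X M \<and> M \<noteq> topspace X \<and> x \<in> M \<and> p \<notin> M}" using M p(3) by blast
    then have MK: "M \<subseteq> K" unfolding K_def kappa_def by (rule Union_upper)
    have zM: "z \<notin> M" using z(2) MK KK by blast
    have zY: "{z} \<in> topspace Y" using z(1) zM unfolding tY pts_def by blast
    have VO: "openin Y {R \<in> pts X M. R \<subseteq> U}" unfolding Y_def using open_saturation[OF Mcl Uo] .
    have zV: "{z} \<in> {R \<in> pts X M. R \<subseteq> U}" using zY z unfolding tY U_def by blast
    have disj: "R \<notin> kappa Y M q" if RV: "R \<in> {R \<in> pts X M. R \<subseteq> U}" for R
    proof
      assume "R \<in> kappa Y M q"
      then obtain N where N: "subcontinuum Y N" "N \<noteq> topspace Y" "M \<in> N" "q \<notin> N" "R \<in> N"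
        unfolding kappa_def by blast
      have "compactin Y N" using N(1) unfolding subcontinuum_def by blast
      then have "N \<subseteq> topspace Y" by (rule compactin_subset_topspace)
      then have Npts: "N \<subseteq> pts X M" unfolding tY .
      have sc: "subcontinuum X (\<Union>N)" using Union_subcontinuum[OF L N(1)[unfolded Y_def] N(3)] .
      have "{p} \<notin> N" using N(4) p(1) by simp
      then have pN: "p \<notin> \<Union>N" by (rule Union_notin[OF L Npts p(3)])
      then have "\<Union>N \<noteq> topspace X" using p(2) by blast
      then have "\<Union>N \<in> {M. subcontinuum X M \<and> M \<noteq> topspace X \<and> x \<in> M \<and> p \<notin> M}"
        using sc pN M(3) N(3) by blast
      then have "\<Union>N \<subseteq> K" unfolding K_def kappa_def by (rule Union_upper)
      then have RK: "R \<subseteq> K" using N(5) by blast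
      have RU: "R \<subseteq> U" using RV by blast
      have "R \<in> pts X M" using RV by blast
      then have "R \<noteq> {}" by (rule pts_ne[OF Mne])
      then show False using RK RU KK unfolding U_def by blast
    qed
    have "{z} \<notin> Y closure_of kappa Y M q"
    proof
      assume "{z} \<in> Y closure_of kappa Y M q"
      then have all: "\<forall>T. {z} \<in> T \<and> openin Y T \<longrightarrow> (\<exists>y. y \<in> kappa Y M q \<and> y \<in> T)"
        unfolding in_closure_of by (rule conjunct2)
      obtain y where y: "y \<in> kappa Y M q" "y \<in> {R \<in> pts X M. R \<subseteq> U}"
        using all[rule_format, OF conjI[OF zV VO]] by (elim exE conjE)
      show False using disj[OF y(2)] y(1) by (rule notE)
    qed
    then show False using q(3) zY by simp
  qed
  have "continuum Y \<and> M \<in> topspace Y \<and> null_aposyndetic Y M \<and> \<not> coastal_at Y M"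
    using contY MY nap nco by (intro conjI)
  then show ?thesis by (intro exI)
qed

end
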